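(* Let $(\mathcal{S},\mathcal{A},P,r)$ be a weakly communicating MDP with finite state and action spaces ($S,A$ their sizes) and $r\in[0,1]$; fix $\delta\in(0,1)$. For integers $i\ge1$ let $n_i=2^i$, let $\widehat P^{(i)}$ be a transition kernel, $\mathcal{H}_i=\{\gamma:\frac1{1-\gamma}=2^k\text{ for an integer }k,\ \sqrt{n_i}\le\frac1{1-\gamma}\le n_i\}$, and for each $\gamma\in\mathcal{H}_i$ let $\widetilde\pi_{\gamma,i}$ be a policy and $\widetilde V_{\gamma,i}\in\mathbb{R}^{\mathcal{S}}$. Suppose that for all $i\ge1$ and all $\gamma\in\mathcal{H}_i$: $\|V^{\pi^\star_\gamma}_\gamma-\widehat V^{\pi^\star_\gamma}_{\gamma,i}\|_\infty\le\frac{\alpha(\delta,n_i)}{1-\gamma}\sqrt{\frac{\|V^{\pi^\star_\gamma}_\gamma\|_{\mathrm{sp}}+1}{n_i}}$; $\widehat V^{\widetilde\pi_{\gamma,i}}_{\gamma,i}\ge\widehat V^\star_{\gamma,i}-\frac1{n_i}\mathbf 1$; $\|\widetilde V_{\gamma,i}-\widehat V^\star_{\gamma,i}\|_\infty\le\frac1{n_i}$; and $\|\widehat V^{\widetilde\pi_{\gamma,i}}_{\gamma,i}-V^{\widetilde\pi_{\gamma,i}}_\gamma\|_\infty\le\frac{\alpha(\delta,n_i)}{1-\gamma}\sqrt{\frac{\|\widehat V^{\widetilde\pi_{\gamma,i}}_{\gamma,i}\|_{\mathrm{sp}}+1}{n_i}}$. Define $$\widehat U_i(\gamma)=(1-\gamma)\max_s\widetilde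 V_{\gamma,i}(s)+5\frac{1-\gamma}{n_i}+\frac{2\alpha(\delta,n_i)^2}{(1-\gamma)n_i}+4\alpha(\delta,n_i)\sqrt{\frac{\|\widetilde V_{\gamma,i}\|_{\mathrm{sp}}+1+\frac3{n_i}}{n_i}},$$ $$\widehat L_i(\gamma)=(1-\gamma)\min_s\widetilde V_{\gamma,i}(s)-2\frac{1-\gamma}{n_i}-\alpha(\delta,n_i)\sqrt{\frac{\|\widetilde V_{\gamma,i}\|_{\mathrm{sp}}+\frac3{n_i}+1}{n_i}}.$$ Then for all integers $i\ge1$ and all $\gamma\in\mathcal{H}_i$, $\widehat L_i(\gamma)\mathbf 1\le\rho^{\widetilde\pi_{\gamma,i}}\le\rho^\star\le\widehat U_i(\gamma)\mathbf 1$.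
   Context: $V^\pi_\gamma,V^\star_\gamma$: discounted value of $\pi$ and optimal value in $(P,r,\gamma)$, $\pi^\star_\gamma$ an optimal policy; $\widehat V^\pi_{\gamma,i},\widehat V^\star_{\gamma,i}$: same in $(\widehat P^{(i)},r,\gamma)$. Gain $\rho^\pi(s)=\lim_T\frac1T\mathbb{E}^\pi_s[\sum_{t<T}r(S_t,A_t)]$, $\rho^\star=\sup_\pi\rho^\pi$. $\|x\|_{\mathrm{sp}}=\max x-\min x$. $\alpha(\tilde\delta,\tilde n)=96\sqrt{\log(24SA\tilde n^5/\tilde\delta)}\log_2(\log_2(\tilde n+4))$. Weakly communicating: states split into a set transient under every stationary policy and a communicating set. *)

theory Defs
  imports "HOL-Analysis.Analysis"
begin

text \<open>Finite MDP: states = UNIV of a finite type 's, actions = UNIV of a finite type 'a.\<close>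

definition is_kernel :: "('s::finite \<Rightarrow> 'a::finite \<Rightarrow> 's \<Rightarrow> real) \<Rightarrow> bool" where
  "is_kernel P \<longleftrightarrow> (\<forall>s a s'. 0 \<le> P s a s') \<and> (\<forall>s a. (\<Sum>s'\<in>UNIV. P s a s') = 1)"

definition is_stat_policy :: "('s::finite \<Rightarrow> 'a::finite \<Rightarrow> real) \<Rightarrow> bool" where
  "is_stat_policy \<pi> \<longleftrightarrow> (\<forall>s a. 0 \<le> \<pi> s a) \<and> (\<forall>s. (\<Sum>a\<in>UNIV. \<pi> s a) = 1)"

definition is_markov_policy :: "(nat \<Rightarrow> 's::finite \<Rightarrow> 'a::finite \<Rightarrow> real) \<Rightarrow> bool" where
  "is_markov_policy \<pi> \<longleftrightarrow> (\<forall>t. is_stat_policy (\<pi> t))"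

definition det_policy :: "('s \<Rightarrow> 'a) \<Rightarrow> 's \<Rightarrow> 'a \<Rightarrow> real" where
  "det_policy f = (\<lambda>s a. if a = f s then 1 else 0)"

primrec state_dist :: "('s::finite \<Rightarrow> 'a::finite \<Rightarrow> 's \<Rightarrow> real) \<Rightarrow> (nat \<Rightarrow> 's \<Rightarrow> 'a \<Rightarrow> real)
    \<Rightarrow> 's \<Rightarrow> nat \<Rightarrow> 's \<Rightarrow> real" where
  "state_dist P \<pi> s 0 = (\<lambda>s'. if s' = s then 1 else 0)"
| "state_dist P \<pi> s (Suc t) =
     (\<lambda>s'. \<Sum>u\<in>UNIV. \<Sum>a\<in>UNIV. state_dist P \<pi> s t u * \<pi> t u a * P u a s')"

definition exp_reward :: "('s::finite \<Rightarrow> 'a::finite \<Rightarrow> 's \<Rightarrow> real) \<Rightarrow> ('s \<Rightarrow> 'a \<Rightarrow> real)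
    \<Rightarrow> (nat \<Rightarrow> 's \<Rightarrow> 'a \<Rightarrow> real) \<Rightarrow> 's \<Rightarrow> nat \<Rightarrow> real" where
  "exp_reward P r \<pi> s t = (\<Sum>u\<in>UNIV. \<Sum>a\<in>UNIV. state_dist P \<pi> s t u * \<pi> t u a * r u a)"

definition disc_value :: "('s::finite \<Rightarrow> 'a::finite \<Rightarrow> 's \<Rightarrow> real) \<Rightarrow> ('s \<Rightarrow> 'a \<Rightarrow> real) \<Rightarrow> real
    \<Rightarrow> (nat \<Rightarrow> 's \<Rightarrow> 'a \<Rightarrow> real) \<Rightarrow> 's \<Rightarrow> real" where
  "disc_value P r \<gamma> \<pi> s = (\<Sum>t. \<gamma> ^ t * exp_reward P r \<pi> s t)"

definition opt_disc_value :: "('s::finite \<Rightarrow> 'a::finite \<Rightarrow> 's \<Rightarrow> real) \<Rightarrow> ('s \<Rightarrow> 'a \<Rightarrow> real) \<Rightarrow> real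
    \<Rightarrow> 's \<Rightarrow> real" where
  "opt_disc_value P r \<gamma> s = (SUP \<pi>\<in>{\<pi>. is_markov_policy \<pi>}. disc_value P r \<gamma> \<pi> s)"

text \<open>Gain: long-run average reward (limsup; it is a genuine limit for stationary policies).\<close>
definition gain :: "('s::finite \<Rightarrow> 'a::finite \<Rightarrow> 's \<Rightarrow> real) \<Rightarrow> ('s \<Rightarrow> 'a \<Rightarrow> real)
    \<Rightarrow> (nat \<Rightarrow> 's \<Rightarrow> 'a \<Rightarrow> real) \<Rightarrow> 's \<Rightarrow> real" where
  "gain P r \<pi> s = real_of_ereal (limsup (\<lambda>T. ereal ((\<Sum>t<T. exp_reward P r \<pi> s t) / real T)))"

definition opt_gain :: "('s::finite \<Rightarrow> 'a::finite \<Rightarrow> 's \<Rightarrow> real) \<Rightarrow> ('s \<Rightarrow> 'a \<Rightarrow> real) \<Rightarrow> 's \<Rightarrow> real" where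
  "opt_gain P r s = (SUP \<pi>\<in>{\<pi>. is_markov_policy \<pi>}. gain P r \<pi> s)"

definition accessible :: "('s::finite \<Rightarrow> 'a::finite \<Rightarrow> 's \<Rightarrow> real) \<Rightarrow> ('s \<Rightarrow> 'a \<Rightarrow> real) \<Rightarrow> 's \<Rightarrow> 's \<Rightarrow> bool" where
  "accessible P \<pi> s s' \<longleftrightarrow> (\<exists>t. 0 < state_dist P (\<lambda>_. \<pi>) s t s')"

text \<open>Transient: finite expected number of visits to s starting from s.\<close>
definition transient_state :: "('s::finite \<Rightarrow> 'a::finite \<Rightarrow> 's \<Rightarrow> real) \<Rightarrow> ('s \<Rightarrow> 'a \<Rightarrow> real) \<Rightarrow> 's \<Rightarrow> bool" where
  "transient_state P \<pi> s \<longleftrightarrow> summable (\<lambda>t. state_dist P (\<lambda>_. \<pi>) s t s)"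

definition weakly_communicating :: "('s::finite \<Rightarrow> 'a::finite \<Rightarrow> 's \<Rightarrow> real) \<Rightarrow> bool" where
  "weakly_communicating P \<longleftrightarrow> (\<exists>C.
     (\<forall>s\<in>C. \<forall>s'\<in>C. \<exists>f. accessible P (det_policy f) s s') \<and>
     (\<forall>s. s \<notin> C \<longrightarrow> (\<forall>\<pi>. is_stat_policy \<pi> \<longrightarrow> transient_state P \<pi> s)))"

definition sup_norm :: "('s::finite \<Rightarrow> real) \<Rightarrow> real" where
  "sup_norm x = Max (range (\<lambda>s. \<bar>x s\<bar>))"

definition span :: "('s::finite \<Rightarrow> real) \<Rightarrow> real" where
  "span x = Max (range x) - Min (range x)"

definition alpha :: "nat \<Rightarrow> nat \<Rightarrow> real \<Rightarrow> real \<Rightarrow> real" where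
  "alpha S A \<delta> n = 96 * sqrt (ln (24 * real S * real A * n ^ 5 / \<delta>)) * log 2 (log 2 (n + 4))"

definition hor_set :: "nat \<Rightarrow> real set" where
  "hor_set i = {\<gamma>. (\<exists>k::int. 1 / (1 - \<gamma>) = 2 powr (real_of_int k)) \<and>
      sqrt (2 ^ i) \<le> 1 / (1 - \<gamma>) \<and> 1 / (1 - \<gamma>) \<le> 2 ^ i}"

definition Uhat :: "real \<Rightarrow> real \<Rightarrow> real \<Rightarrow> ('s::finite \<Rightarrow> real) \<Rightarrow> real" where
  "Uhat \<alpha> n \<gamma> V = (1 - \<gamma>) * Max (range V) + 5 * (1 - \<gamma>) / n + 2 * \<alpha>\<^sup>2 / ((1 - \<gamma>) * n)
      + 4 * \<alpha> * sqrt ((span V + 1 + 3 / n) / n)"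

definition Lhat :: "real \<Rightarrow> real \<Rightarrow> real \<Rightarrow> ('s::finite \<Rightarrow> real) \<Rightarrow> real" where
  "Lhat \<alpha> n \<gamma> V = (1 - \<gamma>) * Min (range V) - 2 * (1 - \<gamma>) / n
      - \<alpha> * sqrt ((span V + 3 / n + 1) / n)"

end

theory Submission
  imports Defs
begin


lemma sd_nonneg:
  assumes P: "is_kernel P" and pi: "is_markov_policy \<pi>"
  shows "0 \<le> state_dist P \<pi> s t u"
  using P pi
  by (induction t arbitrary: u) (auto intro!: sum_nonneg mult_nonneg_nonneg simp: is_kernel_def is_markov_policy_def is_stat_policy_def)

lemma sd_sum:
  assumes P: "is_kernel P" and pi: "is_markov_policy \<pi>"
  shows "(\<Sum>u\<in>UNIV. state_dist P \<pi> s t u) = 1"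
proof (induction t)
  case 0 then show ?case by simp
next
  case (Suc t)
  have "(\<Sum>u'\<in>UNIV. state_dist P \<pi> s (Suc t) u') =
     (\<Sum>u'\<in>UNIV. \<Sum>u\<in>UNIV. \<Sum>a\<in>UNIV. state_dist P \<pi> s t u * \<pi> t u a * P u a u')" by simp
  also have "\<dots> = (\<Sum>u\<in>UNIV. \<Sum>u'\<in>UNIV. \<Sum>a\<in>UNIV. state_dist P \<pi> s t u * \<pi> t u a * P u a u')"
    by (rule sum.swap)
  also have "\<dots> = (\<Sum>u\<in>UNIV. \<Sum>a\<in>UNIV. \<Sum>u'\<in>UNIV. state_dist P \<pi> s t u * \<pi> t u a * P u a u')"
    by (rule sum.cong[OF refl], rule sum.swap)
  also have "\<dots> = (\<Sum>u\<in>UNIV. \<Sum>a\<in>UNIV. state_dist P \<pi> s t u * \<pi> t u a * (\<Sum>u'\<in>UNIV. P u a u'))"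
    by (simp only: sum_distrib_left)
  also have "\<dots> = (\<Sum>u\<in>UNIV. state_dist P \<pi> s t u * (\<Sum>a\<in>UNIV. \<pi> t u a))"
    using P by (simp add: is_kernel_def sum_distrib_left)
  also have "\<dots> = 1" using pi Suc by (simp add: is_markov_policy_def is_stat_policy_def)
  finally show ?case .
qed

lemma wavg_le:
  fixes w V :: "'s::finite \<Rightarrow> real"
  assumes "\<And>u. 0 \<le> w u" "(\<Sum>u\<in>UNIV. w u) = 1"
  shows "(\<Sum>u\<in>UNIV. w u * V u) \<le> Max (range V)" "Min (range V) \<le> (\<Sum>u\<in>UNIV. w u * V u)"
proof -
  have "(\<Sum>u\<in>UNIV. w u * V u) \<le> (\<Sum>u\<in>UNIV. w u * Max (range V))"
    by (rule sum_mono, rule mult_left_mono) (auto simp: assms)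
  also have "\<dots> = Max (range V)" by (simp add: sum_distrib_right[symmetric] assms)
  finally show "(\<Sum>u\<in>UNIV. w u * V u) \<le> Max (range V)" .
  have "(\<Sum>u\<in>UNIV. w u * Min (range V)) \<le> (\<Sum>u\<in>UNIV. w u * V u)"
    by (rule sum_mono, rule mult_left_mono) (auto simp: assms)
  moreover have "(\<Sum>u\<in>UNIV. w u * Min (range V)) = Min (range V)" by (simp add: sum_distrib_right[symmetric] assms)
  ultimately show "Min (range V) \<le> (\<Sum>u\<in>UNIV. w u * V u)" by simp
qed

lemma exp_reward_bounds:
  assumes P: "is_kernel P" and pi: "is_markov_policy \<pi>" and r: "\<forall>s a. 0 \<le> r s a \<and> r s a \<le> 1"
  shows "0 \<le> exp_reward P r \<pi> s t" "exp_reward P r \<pi> s t \<le> 1"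
proof -
  have pt: "is_stat_policy (\<pi> t)" using pi by (simp add: is_markov_policy_def)
  have e: "exp_reward P r \<pi> s t = (\<Sum>u\<in>UNIV. state_dist P \<pi> s t u * (\<Sum>a\<in>UNIV. \<pi> t u a * r u a))"
    by (simp add: exp_reward_def sum_distrib_left mult.assoc)
  have b: "0 \<le> (\<Sum>a\<in>UNIV. \<pi> t u a * r u a) \<and> (\<Sum>a\<in>UNIV. \<pi> t u a * r u a) \<le> 1" for u
  proof -
    have "(\<Sum>a\<in>UNIV. \<pi> t u a * r u a) \<le> (\<Sum>a\<in>UNIV. \<pi> t u a)"
      by (rule sum_mono) (use pt r in \<open>auto simp: is_stat_policy_def intro: mult_left_le\<close>)
    then show ?thesis using pt r by (auto simp: is_stat_policy_def intro!: sum_nonneg)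
  qed
  have "(\<Sum>u\<in>UNIV. state_dist P \<pi> s t u * (\<Sum>a\<in>UNIV. \<pi> t u a * r u a)) \<le> Max (range (\<lambda>u. (\<Sum>a\<in>UNIV. \<pi> t u a * r u a)))"
    by (rule wavg_le) (auto simp: sd_nonneg[OF P pi] sd_sum[OF P pi])
  also have "\<dots> \<le> 1" using b by auto
  finally show "exp_reward P r \<pi> s t \<le> 1" using e by simp
  show "0 \<le> exp_reward P r \<pi> s t" unfolding e
    by (rule sum_nonneg, rule mult_nonneg_nonneg) (use b sd_nonneg[OF P pi] in auto)
qed

lemma swap3:
  fixes c :: "'u \<Rightarrow> real"
  shows "(\<Sum>v\<in>V. \<Sum>a\<in>A. (\<Sum>u\<in>U. c u * X u v) * Y v a) = (\<Sum>u\<in>U. c u * (\<Sum>v\<in>V. \<Sum>a\<in>A. X u v * Y v a))"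
proof -
  have "(\<Sum>v\<in>V. \<Sum>a\<in>A. (\<Sum>u\<in>U. c u * X u v) * Y v a) = (\<Sum>v\<in>V. \<Sum>a\<in>A. \<Sum>u\<in>U. c u * (X u v * Y v a))"
    by (simp only: sum_distrib_right mult.assoc)
  also have "\<dots> = (\<Sum>v\<in>V. \<Sum>u\<in>U. \<Sum>a\<in>A. c u * (X u v * Y v a))"
    by (rule sum.cong[OF refl], rule sum.swap)
  also have "\<dots> = (\<Sum>u\<in>U. \<Sum>v\<in>V. \<Sum>a\<in>A. c u * (X u v * Y v a))"
    by (rule sum.swap)
  also have "\<dots> = (\<Sum>u\<in>U. c u * (\<Sum>v\<in>V. \<Sum>a\<in>A. X u v * Y v a))"
    by (simp only: sum_distrib_left)
  finally show ?thesis .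
qed

lemma swap4:
  fixes x :: "'u \<Rightarrow> real"
  shows "(\<Sum>u\<in>U. x u * (\<Sum>u'\<in>W. (\<Sum>a\<in>A. y u a * z u a u') * V u'))
   = (\<Sum>u'\<in>W. (\<Sum>u\<in>U. \<Sum>a\<in>A. x u * y u a * z u a u') * V u')"
proof -
  have "(\<Sum>u\<in>U. x u * (\<Sum>u'\<in>W. (\<Sum>a\<in>A. y u a * z u a u') * V u'))
      = (\<Sum>u\<in>U. \<Sum>u'\<in>W. \<Sum>a\<in>A. x u * y u a * z u a u' * V u')"
    by (simp only: sum_distrib_left sum_distrib_right mult.assoc)
  also have "\<dots> = (\<Sum>u'\<in>W. \<Sum>u\<in>U. \<Sum>a\<in>A. x u * y u a * z u a u' * V u')"
    by (rule sum.swap)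
  also have "\<dots> = (\<Sum>u'\<in>W. (\<Sum>u\<in>U. \<Sum>a\<in>A. x u * y u a * z u a u') * V u')"
    by (simp only: sum_distrib_right)
  finally show ?thesis .
qed

lemma sd_shift:
  "state_dist P \<pi> s (Suc t) s' =
   (\<Sum>u\<in>UNIV. (\<Sum>a\<in>UNIV. \<pi> 0 s a * P s a u) * state_dist P (\<lambda>t. \<pi> (Suc t)) u t s')"
proof (induction t arbitrary: s')
  case 0
  then show ?case by (simp add: sum.remove[of UNIV s] if_distrib[of "\<lambda>x. _ * x"] cong: if_cong)
next
  case (Suc t)
  have "state_dist P \<pi> s (Suc (Suc t)) s' =
     (\<Sum>v\<in>UNIV. \<Sum>a\<in>UNIV. (\<Sum>u\<in>UNIV. (\<Sum>a\<in>UNIV. \<pi> 0 s a * P s a u) * state_dist P (\<lambda>t. \<pi> (Suc t)) u t v) * (\<pi> (Suc t) v a * P v a s'))"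
    using Suc by (simp add: mult.assoc)
  also have "\<dots> = (\<Sum>u\<in>UNIV. (\<Sum>a\<in>UNIV. \<pi> 0 s a * P s a u) * (\<Sum>v\<in>UNIV. \<Sum>a\<in>UNIV. state_dist P (\<lambda>t. \<pi> (Suc t)) u t v * (\<pi> (Suc t) v a * P v a s')))"
    by (rule swap3)
  also have "\<dots> = (\<Sum>u\<in>UNIV. (\<Sum>a\<in>UNIV. \<pi> 0 s a * P s a u) * state_dist P (\<lambda>t. \<pi> (Suc t)) u (Suc t) s')"
    by (simp add: mult.assoc)
  finally show ?case .
qed

lemma er_shift:
  "exp_reward P r \<pi> s (Suc t) =
   (\<Sum>u\<in>UNIV. (\<Sum>a\<in>UNIV. \<pi> 0 s a * P s a u) * exp_reward P r (\<lambda>t. \<pi> (Suc t)) u t)"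
proof -
  have "exp_reward P r \<pi> s (Suc t) = (\<Sum>v\<in>UNIV. \<Sum>a\<in>UNIV. (\<Sum>u\<in>UNIV. (\<Sum>a\<in>UNIV. \<pi> 0 s a * P s a u) * state_dist P (\<lambda>t. \<pi> (Suc t)) u t v) * (\<pi> (Suc t) v a * r v a))"
    unfolding exp_reward_def sd_shift by (simp only: mult.assoc)
  also have "\<dots> = (\<Sum>u\<in>UNIV. (\<Sum>a\<in>UNIV. \<pi> 0 s a * P s a u) * (\<Sum>v\<in>UNIV. \<Sum>a\<in>UNIV. state_dist P (\<lambda>t. \<pi> (Suc t)) u t v * (\<pi> (Suc t) v a * r v a)))"
    by (rule swap3)
  also have "\<dots> = (\<Sum>u\<in>UNIV. (\<Sum>a\<in>UNIV. \<pi> 0 s a * P s a u) * exp_reward P r (\<lambda>t. \<pi> (Suc t)) u t)"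
    unfolding exp_reward_def by (simp only: mult.assoc)
  finally show ?thesis .
qed


lemma er_zero: "exp_reward P r \<pi> s 0 = (\<Sum>a\<in>UNIV. \<pi> 0 s a * r s a)"
  by (simp add: exp_reward_def sum.remove[of UNIV s])

lemma markov_shift: "is_markov_policy \<pi> \<Longrightarrow> is_markov_policy (\<lambda>t. \<pi> (Suc t))"
  by (simp add: is_markov_policy_def)

lemma disc_summable:
  assumes P: "is_kernel P" and pi: "is_markov_policy \<pi>" and r: "\<forall>s a. 0 \<le> r s a \<and> r s a \<le> 1"
    and g: "0 \<le> \<gamma>" "\<gamma> < 1"
  shows "summable (\<lambda>t. \<gamma> ^ t * exp_reward P r \<pi> s t)"
  by (rule summable_comparison_test[of _ "\<lambda>t. \<gamma> ^ t"])
     (use exp_reward_bounds[OF P pi r] g in \<open>auto intro!: exI[of _ 0] mult_left_le simp: summable_geometric\<close>)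

lemma disc_bounds:
  assumes P: "is_kernel P" and pi: "is_markov_policy \<pi>" and r: "\<forall>s a. 0 \<le> r s a \<and> r s a \<le> 1"
    and g: "0 \<le> \<gamma>" "\<gamma> < 1"
  shows "disc_value P r \<gamma> \<pi> s \<le> 1 / (1 - \<gamma>)"
proof -
  have "disc_value P r \<gamma> \<pi> s \<le> (\<Sum>t. \<gamma> ^ t)"
    unfolding disc_value_def
    by (rule suminf_le) (use exp_reward_bounds[OF P pi r] g disc_summable[OF P pi r g] in \<open>auto intro: mult_left_le simp: summable_geometric\<close>)
  also have "\<dots> = 1 / (1 - \<gamma>)" using g by (simp add: suminf_geometric)
  finally show ?thesis .
qed

lemma disc_shift:
  assumes P: "is_kernel P" and pi: "is_markov_policy \<pi>" and r: "\<forall>s a. 0 \<le> r s a \<and> r s a \<le> 1"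
    and g: "0 \<le> \<gamma>" "\<gamma> < 1"
  shows "disc_value P r \<gamma> \<pi> s = (\<Sum>a\<in>UNIV. \<pi> 0 s a * r s a) +
     \<gamma> * (\<Sum>u\<in>UNIV. (\<Sum>a\<in>UNIV. \<pi> 0 s a * P s a u) * disc_value P r \<gamma> (\<lambda>t. \<pi> (Suc t)) u)"
proof -
  let ?f = "\<lambda>t. \<gamma> ^ t * exp_reward P r \<pi> s t"
  have sf: "summable ?f" by (rule disc_summable[OF P pi r g])
  have ps: "is_markov_policy (\<lambda>t. \<pi> (Suc t))" using pi by (rule markov_shift)
  have "disc_value P r \<gamma> \<pi> s = ?f 0 + (\<Sum>t. ?f (Suc t))"
    unfolding disc_value_def using suminf_split_head[OF sf] by simp
  also have "(\<Sum>t. ?f (Suc t)) = (\<Sum>t. \<gamma> * (\<Sum>u\<in>UNIV. (\<Sum>a\<in>UNIV. \<pi> 0 s a * P s a u) * (\<gamma> ^ t * exp_reward P r (\<lambda>t. \<pi> (Suc t)) u t)))"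
    by (simp add: er_shift sum_distrib_left mult.assoc mult.left_commute)
  also have "\<dots> = \<gamma> * (\<Sum>t. (\<Sum>u\<in>UNIV. (\<Sum>a\<in>UNIV. \<pi> 0 s a * P s a u) * (\<gamma> ^ t * exp_reward P r (\<lambda>t. \<pi> (Suc t)) u t)))"
    by (rule suminf_mult) (intro summable_sum summable_mult disc_summable[OF P ps r g])
  also have "(\<Sum>t. (\<Sum>u\<in>UNIV. (\<Sum>a\<in>UNIV. \<pi> 0 s a * P s a u) * (\<gamma> ^ t * exp_reward P r (\<lambda>t. \<pi> (Suc t)) u t)))
     = (\<Sum>u\<in>UNIV. (\<Sum>t. (\<Sum>a\<in>UNIV. \<pi> 0 s a * P s a u) * (\<gamma> ^ t * exp_reward P r (\<lambda>t. \<pi> (Suc t)) u t)))"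
    by (rule suminf_sum) (intro summable_mult disc_summable[OF P ps r g])
  also have "\<dots> = (\<Sum>u\<in>UNIV. (\<Sum>a\<in>UNIV. \<pi> 0 s a * P s a u) * disc_value P r \<gamma> (\<lambda>t. \<pi> (Suc t)) u)"
    unfolding disc_value_def
    by (rule sum.cong[OF refl], rule suminf_mult) (intro disc_summable[OF P ps r g])
  finally show ?thesis by (simp add: er_zero)
qed



lemma limsup_bounds:
  fixes f :: "nat \<Rightarrow> real"
  assumes h: "\<forall>T>0. a * real T - K \<le> f T \<and> f T \<le> b * real T + K"
  shows "a \<le> real_of_ereal (limsup (\<lambda>T. ereal (f T / real T)))
     \<and> real_of_ereal (limsup (\<lambda>T. ereal (f T / real T))) \<le> b"
proof -
  have lim0: "(\<lambda>T. K / real T) \<longlonglongrightarrow> 0"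
    by (rule tendsto_divide_0[OF tendsto_const]) (rule filterlim_at_top_imp_at_infinity[OF filterlim_real_sequentially])
  have limb: "(\<lambda>T. ereal (b + K / real T)) \<longlonglongrightarrow> ereal b"
    using tendsto_add[OF tendsto_const[of b] lim0] by (simp add: lim_ereal)
  have lima: "(\<lambda>T. ereal (a - K / real T)) \<longlonglongrightarrow> ereal a"
    using tendsto_diff[OF tendsto_const[of a] lim0] by (simp add: lim_ereal)
  have ev: "eventually (\<lambda>T. a - K / real T \<le> f T / real T \<and> f T / real T \<le> b + K / real T) sequentially"
    using eventually_gt_at_top[of 0]
  proof (rule eventually_mono)
    fix T :: nat assume T: "0 < T"
    then have "a * real T - K \<le> f T \<and> f T \<le> b * real T + K" using h by auto
    then have 1: "(a * real T - K) / real T \<le> f T / real T" "f T / real T \<le> (b * real T + K) / real T"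
      using T by (auto intro: divide_right_mono)
    have "(a * real T - K) / real T = a - K / real T" "(b * real T + K) / real T = b + K / real T"
      using T by (auto simp: field_simps)
    then show "a - K / real T \<le> f T / real T \<and> f T / real T \<le> b + K / real T"
      using 1 by simp
  qed
  have "limsup (\<lambda>T. ereal (f T / real T)) \<le> limsup (\<lambda>T. ereal (b + K / real T))"
    by (rule Limsup_mono) (use ev in \<open>auto elim!: eventually_mono\<close>)
  also have "\<dots> = ereal b" by (rule lim_imp_Limsup[OF _ limb]) simp
  finally have up: "limsup (\<lambda>T. ereal (f T / real T)) \<le> ereal b" .
  have "ereal a = liminf (\<lambda>T. ereal (a - K / real T))" by (rule lim_imp_Liminf[OF _ lima, symmetric]) simp
  also have "\<dots> \<le> liminf (\<lambda>T. ereal (f T / real T))"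
    by (rule Liminf_mono) (use ev in \<open>auto elim!: eventually_mono\<close>)
  also have "\<dots> \<le> limsup (\<lambda>T. ereal (f T / real T))" by (rule Liminf_le_Limsup) simp
  finally have lo: "ereal a \<le> limsup (\<lambda>T. ereal (f T / real T))" .
  show ?thesis using up lo
    by (cases "limsup (\<lambda>T. ereal (f T / real T))") auto
qed

lemma sd_next:
  "(\<Sum>u\<in>UNIV. state_dist P \<pi> s t u * (\<Sum>u'\<in>UNIV. (\<Sum>a\<in>UNIV. \<pi> t u a * P u a u') * V u'))
   = (\<Sum>u'\<in>UNIV. state_dist P \<pi> s (Suc t) u' * V u')"
  by (simp only: swap4 state_dist.simps)

lemma er_alt: "exp_reward P r \<pi> s t = (\<Sum>u\<in>UNIV. state_dist P \<pi> s t u * (\<Sum>a\<in>UNIV. \<pi> t u a * r u a))"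
  by (simp add: exp_reward_def sum_distrib_left mult.assoc)

lemma tele_sum: "(\<Sum>t<T. m t - g * m (Suc t)) = (1 - g) * (\<Sum>t<T. m t) + g * (m 0 - m T)"
  for m :: "nat \<Rightarrow> real"
  by (induction T) (simp_all add: algebra_simps)

lemma sum_step_eq:
  fixes w V X :: "'s::finite \<Rightarrow> real"
  shows "(\<Sum>u\<in>UNIV. w u * (V u - \<gamma> * X u)) = (\<Sum>u\<in>UNIV. w u * V u) - \<gamma> * (\<Sum>u\<in>UNIV. w u * X u)"
  by (simp add: right_diff_distrib sum_subtractf sum_distrib_left mult.left_commute)

lemma tele_bound_up:
  fixes m :: "nat \<Rightarrow> real"
  assumes mb: "\<And>t. mn \<le> m t \<and> m t \<le> mx" and g: "0 \<le> \<gamma>" "\<gamma> < 1"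
  shows "(1 - \<gamma>) * (\<Sum>t<T. m t) + \<gamma> * (m 0 - m T) \<le> (1 - \<gamma>) * mx * real T + \<gamma> * (mx - mn)"
proof -
  have "(\<Sum>t<T. m t) \<le> (\<Sum>t<T. mx)" by (rule sum_mono) (use mb in blast)
  then have 1: "(1 - \<gamma>) * (\<Sum>t<T. m t) \<le> (1 - \<gamma>) * mx * real T" using g
    by (simp add: mult_left_mono mult.assoc mult.commute)
  have "m 0 - m T \<le> mx - mn" using mb[of 0] mb[of T] by linarith
  then have 2: "\<gamma> * (m 0 - m T) \<le> \<gamma> * (mx - mn)" using g(1) by (rule mult_left_mono)
  show ?thesis using 1 2 by linarith
qed

lemma tele_bound_lo:
  fixes m :: "nat \<Rightarrow> real"
  assumes mb: "\<And>t. mn \<le> m t \<and> m t \<le> mx" and g: "0 \<le> \<gamma>" "\<gamma> < 1"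
  shows "(1 - \<gamma>) * mn * real T - \<gamma> * (mx - mn) \<le> (1 - \<gamma>) * (\<Sum>t<T. m t) + \<gamma> * (m 0 - m T)"
proof -
  have "(\<Sum>t<T. mn) \<le> (\<Sum>t<T. m t)" by (rule sum_mono) (use mb in blast)
  then have 1: "(1 - \<gamma>) * mn * real T \<le> (1 - \<gamma>) * (\<Sum>t<T. m t)" using g
    by (simp add: mult_left_mono mult.assoc mult.commute)
  have "mn - mx \<le> m 0 - m T" using mb[of 0] mb[of T] by linarith
  then have 2: "\<gamma> * (mn - mx) \<le> \<gamma> * (m 0 - m T)" using g(1) by (rule mult_left_mono)
  have "\<gamma> * (mn - mx) = - (\<gamma> * (mx - mn))" by (simp add: algebra_simps)
  then show ?thesis using 1 2 by linarith
qed

lemma gain_upper: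
  assumes P: "is_kernel P" and pi: "is_markov_policy \<pi>" and r: "\<forall>s a. 0 \<le> r s a \<and> r s a \<le> 1"
    and g: "0 \<le> \<gamma>" "\<gamma> < 1"
    and hyp: "\<forall>t u. (\<Sum>a\<in>UNIV. \<pi> t u a * r u a) + \<gamma> * (\<Sum>u'\<in>UNIV. (\<Sum>a\<in>UNIV. \<pi> t u a * P u a u') * V u') \<le> V u"
  shows "gain P r \<pi> s \<le> (1 - \<gamma>) * Max (range V)"
proof -
  define m where "m t = (\<Sum>u\<in>UNIV. state_dist P \<pi> s t u * V u)" for t
  have mb: "Min (range V) \<le> m t \<and> m t \<le> Max (range V)" for t
    unfolding m_def using wavg_le[of "state_dist P \<pi> s t" V] sd_nonneg[OF P pi] sd_sum[OF P pi] by blast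
  have step: "exp_reward P r \<pi> s t \<le> m t - \<gamma> * m (Suc t)" for t
  proof -
    have "exp_reward P r \<pi> s t \<le> (\<Sum>u\<in>UNIV. state_dist P \<pi> s t u * (V u - \<gamma> * (\<Sum>u'\<in>UNIV. (\<Sum>a\<in>UNIV. \<pi> t u a * P u a u') * V u')))"
      unfolding er_alt
    proof (rule sum_mono, rule mult_left_mono)
      fix u
      show "(\<Sum>a\<in>UNIV. \<pi> t u a * r u a) \<le> V u - \<gamma> * (\<Sum>u'\<in>UNIV. (\<Sum>a\<in>UNIV. \<pi> t u a * P u a u') * V u')"
        using hyp[rule_format, of t u] by linarith
      show "0 \<le> state_dist P \<pi> s t u" by (rule sd_nonneg[OF P pi])
    qed
    also have "\<dots> = m t - \<gamma> * m (Suc t)"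
      unfolding m_def sd_next[symmetric] by (rule sum_step_eq)
    finally show ?thesis .
  qed
  have "\<forall>T>0. 0 * real T - \<gamma> * (Max (range V) - Min (range V)) \<le> (\<Sum>t<T. exp_reward P r \<pi> s t)
     \<and> (\<Sum>t<T. exp_reward P r \<pi> s t) \<le> (1 - \<gamma>) * Max (range V) * real T + \<gamma> * (Max (range V) - Min (range V))"
  proof (intro allI impI conjI)
    fix T :: nat
    have "Min (range V) \<le> Max (range V)" using mb[of 0] by linarith
    then have "0 \<le> \<gamma> * (Max (range V) - Min (range V))" using g by simp
    moreover have "0 \<le> (\<Sum>t<T. exp_reward P r \<pi> s t)"
      by (rule sum_nonneg) (rule exp_reward_bounds(1)[OF P pi r])
    ultimately show "0 * real T - \<gamma> * (Max (range V) - Min (range V)) \<le> (\<Sum>t<T. exp_reward P r \<pi> s t)"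
      by linarith
    have "(\<Sum>t<T. exp_reward P r \<pi> s t) \<le> (\<Sum>t<T. m t - \<gamma> * m (Suc t))" by (rule sum_mono) (rule step)
    also have "\<dots> = (1 - \<gamma>) * (\<Sum>t<T. m t) + \<gamma> * (m 0 - m T)" by (rule tele_sum)
    also have "\<dots> \<le> (1 - \<gamma>) * Max (range V) * real T + \<gamma> * (Max (range V) - Min (range V))"
      by (rule tele_bound_up[OF mb g])
    finally show "(\<Sum>t<T. exp_reward P r \<pi> s t) \<le> (1 - \<gamma>) * Max (range V) * real T + \<gamma> * (Max (range V) - Min (range V))" .
  qed
  from limsup_bounds[OF this] show ?thesis unfolding gain_def by blast
qed

lemma gain_lower:
  assumes P: "is_kernel P" and pi: "is_markov_policy \<pi>" and r: "\<forall>s a. 0 \<le> r s a \<and> r s a \<le> 1"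
    and g: "0 \<le> \<gamma>" "\<gamma> < 1"
    and hyp: "\<forall>t u. V u \<le> (\<Sum>a\<in>UNIV. \<pi> t u a * r u a) + \<gamma> * (\<Sum>u'\<in>UNIV. (\<Sum>a\<in>UNIV. \<pi> t u a * P u a u') * V u')"
  shows "(1 - \<gamma>) * Min (range V) \<le> gain P r \<pi> s"
proof -
  define m where "m t = (\<Sum>u\<in>UNIV. state_dist P \<pi> s t u * V u)" for t
  have mb: "Min (range V) \<le> m t \<and> m t \<le> Max (range V)" for t
    unfolding m_def using wavg_le[of "state_dist P \<pi> s t" V] sd_nonneg[OF P pi] sd_sum[OF P pi] by blast
  have step: "m t - \<gamma> * m (Suc t) \<le> exp_reward P r \<pi> s t" for t
  proof -
    have "m t - \<gamma> * m (Suc t) = (\<Sum>u\<in>UNIV. state_dist P \<pi> s t u * (V u - \<gamma> * (\<Sum>u'\<in>UNIV. (\<Sum>a\<in>UNIV. \<pi> t u a * P u a u') * V u')))"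
      unfolding m_def sd_next[symmetric] by (rule sum_step_eq[symmetric])
    also have "\<dots> \<le> exp_reward P r \<pi> s t"
      unfolding er_alt
    proof (rule sum_mono, rule mult_left_mono)
      fix u
      show "V u - \<gamma> * (\<Sum>u'\<in>UNIV. (\<Sum>a\<in>UNIV. \<pi> t u a * P u a u') * V u') \<le> (\<Sum>a\<in>UNIV. \<pi> t u a * r u a)"
        using hyp[rule_format, of u t] by linarith
      show "0 \<le> state_dist P \<pi> s t u" by (rule sd_nonneg[OF P pi])
    qed
    finally show ?thesis .
  qed
  have "\<forall>T>0. (1 - \<gamma>) * Min (range V) * real T - \<gamma> * (Max (range V) - Min (range V)) \<le> (\<Sum>t<T. exp_reward P r \<pi> s t)
     \<and> (\<Sum>t<T. exp_reward P r \<pi> s t) \<le> 1 * real T + \<gamma> * (Max (range V) - Min (range V))"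
  proof (intro allI impI conjI)
    fix T :: nat
    have "Min (range V) \<le> Max (range V)" using mb[of 0] by linarith
    then have 0: "0 \<le> \<gamma> * (Max (range V) - Min (range V))" using g by simp
    have "(\<Sum>t<T. exp_reward P r \<pi> s t) \<le> (\<Sum>t<T. 1)"
      by (rule sum_mono) (rule exp_reward_bounds(2)[OF P pi r])
    then show "(\<Sum>t<T. exp_reward P r \<pi> s t) \<le> 1 * real T + \<gamma> * (Max (range V) - Min (range V))"
      using 0 by simp
    have "(1 - \<gamma>) * Min (range V) * real T - \<gamma> * (Max (range V) - Min (range V))
        \<le> (1 - \<gamma>) * (\<Sum>t<T. m t) + \<gamma> * (m 0 - m T)"
      by (rule tele_bound_lo[OF mb g])
    also have "\<dots> = (\<Sum>t<T. m t - \<gamma> * m (Suc t))" by (rule tele_sum[symmetric])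
    also have "\<dots> \<le> (\<Sum>t<T. exp_reward P r \<pi> s t)" by (rule sum_mono) (rule step)
    finally show "(1 - \<gamma>) * Min (range V) * real T - \<gamma> * (Max (range V) - Min (range V)) \<le> (\<Sum>t<T. exp_reward P r \<pi> s t)" .
  qed
  from limsup_bounds[OF this] show ?thesis unfolding gain_def by blast
qed



lemma aux: "(x::real) \<le> z + w + (z + w) / 2 \<Longrightarrow> 0 \<le> z \<Longrightarrow> 0 \<le> w \<Longrightarrow> x \<le> 2 * z + 4 * w"
  by (simp add: field_simps)

lemma key_alg:
  fixes g n \<alpha> q x :: real
  assumes g: "0 < g" and n: "0 < n" and al: "0 \<le> \<alpha>" and q: "0 \<le> q" and x: "0 \<le> x"
    and h: "x \<le> q + \<alpha> / g * sqrt (q / n) + \<alpha> / g * sqrt (x / n)"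
  shows "g * (\<alpha> / g * sqrt (x / n)) \<le> 2 * \<alpha>\<^sup>2 / (g * n) + 4 * \<alpha> * sqrt (q / n)"
proof -
  define sn where "sn = sqrt n"
  have sn: "0 < sn" "sn * sn = n" using n by (auto simp: sn_def)
  define y where "y = sqrt x"
  have y: "0 \<le> y" "y * y = x" using x by (auto simp: y_def)
  define a where "a = \<alpha> / (g * sn)"
  have a: "0 \<le> a" using al g sn by (auto simp: a_def)
  define w where "w = \<alpha> * sqrt (q / n)"
  have w: "0 \<le> w" using al q n by (simp add: w_def)
  define c where "c = q + w / g"
  have c: "0 \<le> c" using q w g by (simp add: c_def)
  have sxn: "sqrt (x / n) = y / sn" by (simp add: y_def sn_def real_sqrt_divide)
  have D: "\<alpha> / g * sqrt (x / n) = a * y" by (simp add: sxn a_def)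
  have yy: "y * y \<le> c + a * y" using h unfolding D by (simp add: y c_def w_def)
  have ya: "y \<le> a + sqrt c"
  proof (rule ccontr)
    assume "\<not> ?thesis"
    then have 1: "a + sqrt c < y" by simp
    have "sqrt c * sqrt c = c" using c by simp
    have "c \<le> (a + sqrt c) * sqrt c" using a c by (simp add: algebra_simps)
    also have "\<dots> \<le> (a + sqrt c) * (y - a)"
      using 1 a c by (intro mult_left_mono) auto
    also have "\<dots> < y * (y - a)"
      proof (intro mult_strict_right_mono)
      have "0 \<le> sqrt c" using c by simp
      then show "0 < y - a" using 1 by linarith
    qed (use 1 in auto)
    finally show False using yy by (simp add: algebra_simps)
  qed
  have sc: "sqrt c \<le> sqrt q + sqrt (w / g)" unfolding c_def
    by (rule sqrt_add_le_add_sqrt) (use q w g in auto)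
  have "g * (a * y) \<le> g * (a * (a + sqrt q + sqrt (w / g)))"
    using ya sc a g by (intro mult_left_mono) auto
  also have "\<dots> = g * a * a + g * a * sqrt q + g * a * sqrt (w / g)" by (simp add: algebra_simps)
  also have "g * a * a = \<alpha>\<^sup>2 / (g * n)" using g sn by (simp add: a_def power2_eq_square field_simps)
  also have "g * a * sqrt q = w" using g sn by (simp add: a_def w_def sn_def real_sqrt_divide)
  also have "g * a * sqrt (w / g) = sqrt (\<alpha>\<^sup>2 / (g * n) * w)"
  proof -
    have "g * a = sqrt (\<alpha>\<^sup>2 / n)" using g sn al by (simp add: a_def sn_def real_sqrt_divide)
    then have "g * a * sqrt (w / g) = sqrt (\<alpha>\<^sup>2 / n * (w / g))" by (simp only: real_sqrt_mult)
    moreover have "\<alpha>\<^sup>2 / n * (w / g) = \<alpha>\<^sup>2 / (g * n) * w" by simp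
    ultimately show ?thesis by simp
  qed
  finally have E: "g * (a * y) \<le> \<alpha>\<^sup>2 / (g * n) + w + sqrt (\<alpha>\<^sup>2 / (g * n) * w)" .
  have "sqrt (\<alpha>\<^sup>2 / (g * n) * w) \<le> (\<alpha>\<^sup>2 / (g * n) + w) / 2"
    by (rule arith_geo_mean_sqrt) (use g n w in auto)
  with E have "g * (a * y) \<le> \<alpha>\<^sup>2 / (g * n) + w + (\<alpha>\<^sup>2 / (g * n) + w) / 2" by linarith
  moreover have "0 \<le> \<alpha>\<^sup>2 / (g * n)" using g n by simp
  ultimately have "g * (a * y) \<le> 2 * (\<alpha>\<^sup>2 / (g * n)) + 4 * w"
    using w aux[of "g * (a * y)" "\<alpha>\<^sup>2 / (g * n)" w] by blast
  moreover have "g * (\<alpha> / g * sqrt (x / n)) = g * (a * y)" by (simp only: D)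
  ultimately show ?thesis by (simp add: w_def)
qed



lemma sup_normD:
  assumes "sup_norm x \<le> c" shows "\<bar>x s\<bar> \<le> c"
proof -
  have "\<bar>x s\<bar> \<le> Max (range (\<lambda>s. \<bar>x s\<bar>))" by (rule Max_ge) auto
  then show ?thesis using assms unfolding sup_norm_def by linarith
qed

lemma max_shift:
  fixes V W :: "'s::finite \<Rightarrow> real"
  assumes "\<And>s. V s \<le> W s + c"
  shows "Max (range V) \<le> Max (range W) + c"
proof -
  have "Max (range V) \<in> range V" by (rule Max_in) auto
  then obtain s where "Max (range V) = V s" by blast
  moreover have "W s \<le> Max (range W)" by (rule Max_ge) auto
  ultimately show ?thesis using assms[of s] by linarith
qed

lemma min_shift:
  fixes V W :: "'s::finite \<Rightarrow> real"
  assumes "\<And>s. V s \<le> W s + c"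
  shows "Min (range V) \<le> Min (range W) + c"
proof -
  have "Min (range W) \<in> range W" by (rule Min_in) auto
  then obtain s where "Min (range W) = W s" by blast
  moreover have "Min (range V) \<le> V s" by (rule Min_le) auto
  ultimately show ?thesis using assms[of s] by linarith
qed

lemma span_nonneg: "0 \<le> span (V::'s::finite \<Rightarrow> real)"
proof -
  have "Min (range V) \<le> V undefined" "V undefined \<le> Max (range V)" by (auto intro: Min_le Max_ge)
  then show ?thesis by (simp add: span_def)
qed

lemma opt_ge:
  assumes P: "is_kernel P" and pi: "is_markov_policy \<pi>" and r: "\<forall>s a. 0 \<le> r s a \<and> r s a \<le> 1"
    and g: "0 \<le> \<gamma>" "\<gamma> < 1"
  shows "disc_value P r \<gamma> \<pi> s \<le> opt_disc_value P r \<gamma> s"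
proof -
  have "bdd_above ((\<lambda>\<pi>. disc_value P r \<gamma> \<pi> s) ` {\<pi>. is_markov_policy \<pi>})"
    by (rule bdd_aboveI2[where M="1 / (1 - \<gamma>)"]) (rule disc_bounds[OF P _ r g], simp)
  then show ?thesis unfolding opt_disc_value_def
    by (rule cSUP_upper[rotated]) (use pi in simp)
qed

lemma stat_markov: "is_stat_policy p \<Longrightarrow> is_markov_policy (\<lambda>_. p)"
  by (simp add: is_markov_policy_def)

lemma bellman_opt:
  assumes P: "is_kernel P" and r: "\<forall>s a. 0 \<le> r s a \<and> r s a \<le> 1"
    and g: "0 \<le> \<gamma>" "\<gamma> < 1" and ps: "is_stat_policy p"
    and opt: "\<forall>s. disc_value P r \<gamma> (\<lambda>_. p) s = opt_disc_value P r \<gamma> s"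
    and pi: "is_markov_policy \<pi>"
  shows "\<forall>t u. (\<Sum>a\<in>UNIV. \<pi> t u a * r u a) + \<gamma> * (\<Sum>u'\<in>UNIV. (\<Sum>a\<in>UNIV. \<pi> t u a * P u a u') * disc_value P r \<gamma> (\<lambda>_. p) u') \<le> disc_value P r \<gamma> (\<lambda>_. p) u"
proof (intro allI)
  fix t u
  define \<pi>' where "\<pi>' = (\<lambda>k::nat. if k = 0 then \<pi> t else p)"
  have m: "is_markov_policy \<pi>'" using pi ps by (auto simp: \<pi>'_def is_markov_policy_def)
  have sh: "(\<lambda>k. \<pi>' (Suc k)) = (\<lambda>_. p)" by (simp add: \<pi>'_def)
  have "(\<Sum>a\<in>UNIV. \<pi> t u a * r u a) + \<gamma> * (\<Sum>u'\<in>UNIV. (\<Sum>a\<in>UNIV. \<pi> t u a * P u a u') * disc_value P r \<gamma> (\<lambda>_. p) u')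
      = disc_value P r \<gamma> \<pi>' u"
  proof -
    have z: "\<pi>' 0 = \<pi> t" by (simp add: \<pi>'_def)
    show ?thesis using disc_shift[OF P m r g, of u] unfolding sh z by simp
  qed
  also have "\<dots> \<le> opt_disc_value P r \<gamma> u" by (rule opt_ge[OF P m r g])
  also have "\<dots> = disc_value P r \<gamma> (\<lambda>_. p) u" using opt by simp
  finally show "(\<Sum>a\<in>UNIV. \<pi> t u a * r u a) + \<gamma> * (\<Sum>u'\<in>UNIV. (\<Sum>a\<in>UNIV. \<pi> t u a * P u a u') * disc_value P r \<gamma> (\<lambda>_. p) u') \<le> disc_value P r \<gamma> (\<lambda>_. p) u" .
qed

lemma opt_gain_bounds:
  fixes q :: "'s::finite \<Rightarrow> 'a::finite \<Rightarrow> real"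
  assumes P: "is_kernel P" and r: "\<forall>s a. 0 \<le> r s a \<and> r s a \<le> 1"
    and g: "0 \<le> \<gamma>" "\<gamma> < 1" and ps: "is_stat_policy p"
    and opt: "\<forall>s. disc_value P r \<gamma> (\<lambda>_. p) s = opt_disc_value P r \<gamma> s"
    and pt: "is_stat_policy q"
  shows "gain P r (\<lambda>_. q) s \<le> opt_gain P r s"
    "opt_gain P r s \<le> (1 - \<gamma>) * Max (range (disc_value P r \<gamma> (\<lambda>_. p)))"
proof -
  have b: "gain P r \<pi> s \<le> (1 - \<gamma>) * Max (range (disc_value P r \<gamma> (\<lambda>_. p)))" if "is_markov_policy \<pi>" for \<pi>
    by (rule gain_upper[OF P that r g bellman_opt[OF P r g ps opt that]])
  have "bdd_above ((\<lambda>\<pi>. gain P r \<pi> s) ` {\<pi>. is_markov_policy \<pi>})"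
    by (rule bdd_aboveI2[where M="(1 - \<gamma>) * Max (range (disc_value P r \<gamma> (\<lambda>_. p)))"]) (rule b, simp)
  then show "gain P r (\<lambda>_. q) s \<le> opt_gain P r s" unfolding opt_gain_def
    by (rule cSUP_upper[rotated]) (simp add: stat_markov[OF pt])
  have ne: "{\<pi>::nat \<Rightarrow> 's \<Rightarrow> 'a \<Rightarrow> real. is_markov_policy \<pi>} \<noteq> {}" using stat_markov[OF pt] by blast
  show "opt_gain P r s \<le> (1 - \<gamma>) * Max (range (disc_value P r \<gamma> (\<lambda>_. p)))" unfolding opt_gain_def
    by (rule cSUP_least[OF ne]) (rule b, simp)
qed

lemma gain_stat_lower:
  assumes P: "is_kernel P" and r: "\<forall>s a. 0 \<le> r s a \<and> r s a \<le> 1"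
    and g: "0 \<le> \<gamma>" "\<gamma> < 1" and pt: "is_stat_policy q"
  shows "(1 - \<gamma>) * Min (range (disc_value P r \<gamma> (\<lambda>_. q))) \<le> gain P r (\<lambda>_. q) s"
proof (rule gain_lower[OF P stat_markov[OF pt] r g])
  show "\<forall>t u. disc_value P r \<gamma> (\<lambda>_. q) u \<le> (\<Sum>a\<in>UNIV. q u a * r u a) + \<gamma> * (\<Sum>u'\<in>UNIV. (\<Sum>a\<in>UNIV. q u a * P u a u') * disc_value P r \<gamma> (\<lambda>_. q) u')"
  proof (intro allI)
    fix t u
    show "disc_value P r \<gamma> (\<lambda>_. q) u \<le> (\<Sum>a\<in>UNIV. q u a * r u a) + \<gamma> * (\<Sum>u'\<in>UNIV. (\<Sum>a\<in>UNIV. q u a * P u a u') * disc_value P r \<gamma> (\<lambda>_. q) u')"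
      using disc_shift[OF P stat_markov[OF pt] r g, of u] by linarith
  qed
qed


lemma ge1_mult: "1 \<le> (x::real) \<Longrightarrow> 1 \<le> y \<Longrightarrow> 1 \<le> x * y"
proof -
  assume x: "1 \<le> x" and y: "1 \<le> y"
  have "1 * y \<le> x * y" using x y by (intro mult_right_mono) auto
  then have "y \<le> x * y" by simp
  with y show ?thesis by (rule order_trans)
qed

lemma le_div_delta: "0 \<le> (x::real) \<Longrightarrow> 0 < d \<Longrightarrow> d \<le> 1 \<Longrightarrow> x \<le> x / d"
  using mult_left_le[of d x] by (simp add: le_divide_eq)

theorem lemma9:
  fixes P :: "'s::finite \<Rightarrow> 'a::finite \<Rightarrow> 's \<Rightarrow> real"
    and r :: "'s \<Rightarrow> 'a \<Rightarrow> real"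
    and \<delta> :: real
    and Phat :: "nat \<Rightarrow> 's \<Rightarrow> 'a \<Rightarrow> 's \<Rightarrow> real"
    and pit :: "real \<Rightarrow> nat \<Rightarrow> 's \<Rightarrow> 'a \<Rightarrow> real"
    and Vt :: "real \<Rightarrow> nat \<Rightarrow> 's \<Rightarrow> real"
    and pistar :: "real \<Rightarrow> 's \<Rightarrow> 'a \<Rightarrow> real"
  assumes P: "is_kernel P"
    and wc: "weakly_communicating P"
    and r: "\<forall>s a. 0 \<le> r s a \<and> r s a \<le> 1"
    and \<delta>: "0 < \<delta>" "\<delta> < 1"
    and Phat: "\<forall>i\<ge>1. is_kernel (Phat i)"
    and pistar: "\<forall>i\<ge>1. \<forall>\<gamma>\<in>hor_set i. is_stat_policy (pistar \<gamma>) \<and>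
        (\<forall>s. disc_value P r \<gamma> (\<lambda>_. pistar \<gamma>) s = opt_disc_value P r \<gamma> s)"
    and pit: "\<forall>i\<ge>1. \<forall>\<gamma>\<in>hor_set i. is_stat_policy (pit \<gamma> i)"
    and h1: "\<forall>i\<ge>1. \<forall>\<gamma>\<in>hor_set i.
        sup_norm (\<lambda>s. disc_value P r \<gamma> (\<lambda>_. pistar \<gamma>) s - disc_value (Phat i) r \<gamma> (\<lambda>_. pistar \<gamma>) s)
        \<le> alpha CARD('s) CARD('a) \<delta> (2 ^ i) / (1 - \<gamma>) *
           sqrt ((span (disc_value P r \<gamma> (\<lambda>_. pistar \<gamma>)) + 1) / 2 ^ i)"
    and h2: "\<forall>i\<ge>1. \<forall>\<gamma>\<in>hor_set i. \<forall>s.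
        disc_value (Phat i) r \<gamma> (\<lambda>_. pit \<gamma> i) s \<ge> opt_disc_value (Phat i) r \<gamma> s - 1 / 2 ^ i"
    and h3: "\<forall>i\<ge>1. \<forall>\<gamma>\<in>hor_set i.
        sup_norm (\<lambda>s. Vt \<gamma> i s - opt_disc_value (Phat i) r \<gamma> s) \<le> 1 / 2 ^ i"
    and h4: "\<forall>i\<ge>1. \<forall>\<gamma>\<in>hor_set i.
        sup_norm (\<lambda>s. disc_value (Phat i) r \<gamma> (\<lambda>_. pit \<gamma> i) s - disc_value P r \<gamma> (\<lambda>_. pit \<gamma> i) s)
        \<le> alpha CARD('s) CARD('a) \<delta> (2 ^ i) / (1 - \<gamma>) *
           sqrt ((span (disc_value (Phat i) r \<gamma> (\<lambda>_. pit \<gamma> i)) + 1) / 2 ^ i)"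
  shows "\<forall>i\<ge>1. \<forall>\<gamma>\<in>hor_set i. \<forall>s.
      Lhat (alpha CARD('s) CARD('a) \<delta> (2 ^ i)) (2 ^ i) \<gamma> (Vt \<gamma> i) \<le> gain P r (\<lambda>_. pit \<gamma> i) s \<and>
      gain P r (\<lambda>_. pit \<gamma> i) s \<le> opt_gain P r s \<and>
      opt_gain P r s \<le> Uhat (alpha CARD('s) CARD('a) \<delta> (2 ^ i)) (2 ^ i) \<gamma> (Vt \<gamma> i)"
proof (intro allI impI ballI)
  fix i :: nat and \<gamma> :: real and s :: 's
  assume i: "1 \<le> i" and hs: "\<gamma> \<in> hor_set i"
  define n :: real where "n = 2 ^ i"
  define \<alpha> where "\<alpha> = alpha CARD('s) CARD('a) \<delta> (2 ^ i)"
  define g where "g = 1 - \<gamma>"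
  have n1: "1 \<le> n" unfolding n_def by simp
  have n0: "0 < n" using n1 by simp
  have sq1: "1 \<le> sqrt (2 ^ i :: real)" by simp
  have hg: "sqrt (2 ^ i) \<le> 1 / (1 - \<gamma>)" using hs by (simp add: hor_set_def)
  have g0: "0 < g"
  proof -
    have "0 < 1 / (1 - \<gamma>)" using hg sq1 by linarith
    then show ?thesis by (simp add: g_def)
  qed
  have g1: "g \<le> 1"
  proof -
    have "1 \<le> 1 / (1 - \<gamma>)" using hg sq1 by linarith
    then have "1 \<le> 1 / g" by (simp add: g_def)
    then show ?thesis using g0 by (simp add: field_simps)
  qed
  have ga: "0 \<le> \<gamma>" "\<gamma> < 1" using g0 g1 by (auto simp: g_def)
  have al: "0 \<le> \<alpha>"
  proof -
    define N :: real where "N = 2 ^ i"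
    have N1: "1 \<le> N" by (simp add: N_def)
    have "0 < CARD('s)" by (simp add: card_gt_0_iff)
    then have "1 \<le> real CARD('s)" by simp
    then have c1a: "1 \<le> 24 * real CARD('s)" by linarith
    have "0 < CARD('a)" by (simp add: card_gt_0_iff)
    then have c1b: "1 \<le> real CARD('a)" by simp
    note c1 = c1a c1b
    have "1 \<le> N ^ 5" using N1 by (rule one_le_power)
    then have "1 \<le> 24 * real CARD('s) * real CARD('a) * N ^ 5"
      using c1 by (intro ge1_mult[of "24 * real CARD('s) * real CARD('a)"] ge1_mult[of "24 * real CARD('s)"])
    also have "\<dots> \<le> 24 * real CARD('s) * real CARD('a) * N ^ 5 / \<delta>"
    proof (rule le_div_delta)
      show "0 \<le> 24 * real CARD('s) * real CARD('a) * N ^ 5" using calculation by linarith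
    qed (use \<delta> in auto)
    finally have "0 \<le> ln (24 * real CARD('s) * real CARD('a) * N ^ 5 / \<delta>)" by simp
    moreover have "0 \<le> log 2 (log 2 (N + 4))"
    proof -
      have "1 \<le> log 2 (N + 4)" using N1 by simp
      then show ?thesis by simp
    qed
    ultimately show ?thesis unfolding \<alpha>_def alpha_def N_def by simp
  qed
  have Pi: "is_kernel (Phat i)" using Phat i by simp
  have ps: "is_stat_policy (pistar \<gamma>)" and opt: "\<forall>s. disc_value P r \<gamma> (\<lambda>_. pistar \<gamma>) s = opt_disc_value P r \<gamma> s"
    using pistar i hs by auto
  have pt: "is_stat_policy (pit \<gamma> i)" using pit i hs by auto
  define Vs where "Vs = disc_value P r \<gamma> (\<lambda>_. pistar \<gamma>)"
  define Vhs where "Vhs = disc_value (Phat i) r \<gamma> (\<lambda>_. pistar \<gamma>)"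
  define Vh where "Vh = opt_disc_value (Phat i) r \<gamma>"
  define Vhp where "Vhp = disc_value (Phat i) r \<gamma> (\<lambda>_. pit \<gamma> i)"
  define Vp where "Vp = disc_value P r \<gamma> (\<lambda>_. pit \<gamma> i)"
  define V where "V = Vt \<gamma> i"
  define B where "B = \<alpha> / g * sqrt ((span V + 3 / n + 1) / n)"
  define D where "D = \<alpha> / g * sqrt ((span Vs + 1) / n)"
  have F1: "\<bar>Vs u - Vhs u\<bar> \<le> D" for u
    using sup_normD[OF h1[rule_format, OF i hs]] by (simp add: Vs_def Vhs_def D_def \<alpha>_def g_def n_def)
  have F2: "Vh u - 1 / n \<le> Vhp u" for u using h2 i hs by (simp add: Vh_def Vhp_def n_def)
  have F2': "Vhp u \<le> Vh u" for u unfolding Vhp_def Vh_def by (rule opt_ge[OF Pi stat_markov[OF pt] r ga])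
  have F2'': "Vhs u \<le> Vh u" for u unfolding Vhs_def Vh_def by (rule opt_ge[OF Pi stat_markov[OF ps] r ga])
  have F3: "\<bar>V u - Vh u\<bar> \<le> 1 / n" for u
    using sup_normD[OF h3[rule_format, OF i hs]] by (simp add: V_def Vh_def n_def)
  have F4': "\<bar>Vhp u - Vp u\<bar> \<le> \<alpha> / g * sqrt ((span Vhp + 1) / n)" for u
    using sup_normD[OF h4[rule_format, OF i hs]] by (simp add: Vhp_def Vp_def \<alpha>_def g_def n_def)
  have Vsopt: "Vp u \<le> Vs u" for u
    unfolding Vp_def Vs_def using opt opt_ge[OF P stat_markov[OF pt] r ga] by simp
  have h2n: "2 / n = 1 / n + 1 / n" by simp
  have h3n: "3 / n = 1 / n + 2 / n" by simp
  have F1a: "Vs u \<le> Vhs u + D" for u using F1[of u] by (simp add: abs_le_iff)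
  have F3a: "V u \<le> Vh u + 1 / n" "Vh u \<le> V u + 1 / n" for u using F3[of u] by (simp_all add: abs_le_iff)
  have spVhp: "span Vhp \<le> span V + 3 / n"
  proof -
    have "Max (range Vhp) \<le> Max (range V) + 1 / n"
      by (rule max_shift) (use F2' F3a in \<open>fastforce intro: order_trans\<close>)
    moreover have "Min (range V) \<le> Min (range Vhp) + 2 / n"
    proof (rule min_shift)
      fix u show "V u \<le> Vhp u + 2 / n" using F2[of u] F3a(1)[of u] h2n by linarith
    qed
    ultimately show ?thesis unfolding span_def using h3n by linarith
  qed
  have F4: "\<bar>Vhp u - Vp u\<bar> \<le> B" for u
  proof -
    have "sqrt ((span Vhp + 1) / n) \<le> sqrt ((span V + 3 / n + 1) / n)"
      using spVhp n0 by (intro real_sqrt_le_mono divide_right_mono) auto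
    then have "\<alpha> / g * sqrt ((span Vhp + 1) / n) \<le> B"
      unfolding B_def using al g0 by (intro mult_left_mono) auto
    moreover have "Vhp u - Vp u \<le> \<alpha> / g * sqrt ((span Vhp + 1) / n)" using F4'[of u] by (simp add: abs_le_iff)
    moreover have "Vp u - Vhp u \<le> \<alpha> / g * sqrt ((span Vhp + 1) / n)" using F4'[of u] by (simp add: abs_le_iff)
    ultimately show ?thesis by (simp add: abs_le_iff)
  qed
  have lowVp: "V u - 2 / n - B \<le> Vp u" for u
  proof -
    have "Vhp u - Vp u \<le> B" using F4[of u] by (simp add: abs_le_iff)
    then show ?thesis using F2[of u] F3a(1)[of u] h2n by linarith
  qed
  have minVp: "Min (range V) - 2 / n - B \<le> Min (range Vp)"
  proof -
    have "Min (range V) \<le> Min (range Vp) + (2 / n + B)"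
    proof (rule min_shift)
      fix u show "V u \<le> Vp u + (2 / n + B)" using lowVp[of u] by linarith
    qed
    then show ?thesis by linarith
  qed
  have Lh: "Lhat \<alpha> n \<gamma> V \<le> gain P r (\<lambda>_. pit \<gamma> i) s"
  proof -
    have "Lhat \<alpha> n \<gamma> V = g * (Min (range V) - 2 / n - B)"
    proof -
      have gB: "g * B = \<alpha> * sqrt ((span V + 3 / n + 1) / n)" using g0 by (simp add: B_def)
      have "Lhat \<alpha> n \<gamma> V = g * Min (range V) - 2 * g / n - g * B"
        unfolding Lhat_def gB by (simp add: g_def)
      also have "\<dots> = g * (Min (range V) - 2 / n - B)" by (simp add: algebra_simps)
      finally show ?thesis .
    qed
    also have "\<dots> \<le> g * Min (range Vp)" using minVp g0 by (intro mult_left_mono) auto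
    also have "\<dots> \<le> gain P r (\<lambda>_. pit \<gamma> i) s"
      unfolding g_def Vp_def by (rule gain_stat_lower[OF P r ga pt])
    finally show ?thesis .
  qed
  have G: "gain P r (\<lambda>_. pit \<gamma> i) s \<le> opt_gain P r s"
    and Og: "opt_gain P r s \<le> g * Max (range Vs)"
    using opt_gain_bounds[OF P r ga ps opt pt] by (auto simp: g_def Vs_def)
  have upVs: "Vs u \<le> V u + 1 / n + D" for u
    using F1a[of u] F2''[of u] F3a(2)[of u] by linarith
  have maxVs: "Max (range Vs) \<le> Max (range V) + (1 / n + D)"
  proof (rule max_shift)
    fix u show "Vs u \<le> V u + (1 / n + D)" using upVs[of u] by linarith
  qed
  have minVs: "Min (range V) \<le> Min (range Vs) + (2 / n + B)"
  proof (rule min_shift)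
    fix u show "V u \<le> Vs u + (2 / n + B)" using lowVp[of u] Vsopt[of u] by linarith
  qed
  have spVs: "span Vs + 1 \<le> (span V + 1 + 3 / n) + \<alpha> / g * sqrt ((span V + 1 + 3 / n) / n) + \<alpha> / g * sqrt ((span Vs + 1) / n)"
  proof -
    have "span Vs \<le> span V + 3 / n + B + D" using maxVs minVs h3n unfolding span_def by linarith
    moreover have "B = \<alpha> / g * sqrt ((span V + 1 + 3 / n) / n)" by (simp add: B_def add.commute add.left_commute)
    ultimately show ?thesis by (simp add: D_def)
  qed
  have key: "g * D \<le> 2 * \<alpha>\<^sup>2 / (g * n) + 4 * \<alpha> * sqrt ((span V + 1 + 3 / n) / n)"
    unfolding D_def
    by (rule key_alg[OF g0 n0 al _ _ spVs]) (use span_nonneg[of V] span_nonneg[of Vs] n0 in auto)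
  have Uh: "opt_gain P r s \<le> Uhat \<alpha> n \<gamma> V"
  proof -
    have "g * Max (range Vs) \<le> g * (Max (range V) + (1 / n + D))" using maxVs g0 by (intro mult_left_mono) auto
    also have "\<dots> = g * Max (range V) + g / n + g * D" by (simp add: algebra_simps)
    also have "\<dots> \<le> Uhat \<alpha> n \<gamma> V"
    proof -
      have "g / n \<le> 5 * g / n" using g0 n0 by (simp add: divide_right_mono)
      then show ?thesis using key by (simp add: Uhat_def g_def)
    qed
    finally show ?thesis using Og by linarith
  qed
  show "Lhat (alpha CARD('s) CARD('a) \<delta> (2 ^ i)) (2 ^ i) \<gamma> (Vt \<gamma> i) \<le> gain P r (\<lambda>_. pit \<gamma> i) s \<and>
      gain P r (\<lambda>_. pit \<gamma> i) s \<le> opt_gain P r s \<and>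
      opt_gain P r s \<le> Uhat (alpha CARD('s) CARD('a) \<delta> (2 ^ i)) (2 ^ i) \<gamma> (Vt \<gamma> i)"
    using Lh G Uh by (simp add: \<alpha>_def n_def V_def)
qed

end
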